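(* Let $(\mathcal{V},g)$ be a finite-dimensional real scalar product space, let $J_1,\dots,J_m$ be skew-adjoint endomorphisms of $\mathcal{V}$ with $J_iJ_j+J_jJ_i=-2\delta_{ij}\,\mathrm{id}$ for $1\le i,j\le m$, and let $\mu_0,\dots,\mu_m\in\mathbb{R}$. Then the (Clifford) algebraic curvature tensor $R=\mu_0R^0+\sum_{i=1}^m\mu_iR^{J_i}$ is totally Jacobi-dual.
   Context: A scalar product space is a finite-dimensional real vector space with a nondegenerate symmetric bilinear form $g$; $\varepsilon_X=g(X,X)$. $R^0(X,Y,Z,W)=g(Y,Z)g(X,W)-g(X,Z)g(Y,W)$; for skew-adjoint $J$, $R^J(X,Y,Z,W)=g(JX,Z)g(JY,W)-g(JY,Z)g(JX,W)+2g(JX,Y)g(JZ,W)$. The Jacobi operator is $\mathcal{J}_X(Y)=\sum_{i}\varepsilon_{E_i}R(Y,X,X,E_i)E_i$ for an orthonormal basis $(E_i)$. An eigenvector of $\mathcal{J}_X$ is a nonzero $Y$ with $\mathcal{J}_X(Y)=\lambda Y$, $\lambda\in\mathbb{R}$. $R$ is totally Jacobi-dual if for all $X,Y\in\mathcal{V}$ with $X\neq0$ (null or not): whenever $Y$ is an eigenvector of $\mathcal{J}_X$, then $X$ is an eigenvector of $\mathcal{J}_Y$. *)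

theory Defs
  imports "HOL-Analysis.Analysis"
begin

text \<open>A scalar product space: a finite-dimensional real vector space (a type of class
euclidean_space, used only as a finite-dimensional real vector space; its inner product
plays no role) with a nondegenerate symmetric bilinear form g.\<close>

definition scalar_product :: "('a::euclidean_space \<Rightarrow> 'a \<Rightarrow> real) \<Rightarrow> bool" where
  "scalar_product g \<longleftrightarrow> bilinear g \<and> (\<forall>x y. g x y = g y x)
     \<and> (\<forall>x. (\<forall>y. g x y = 0) \<longrightarrow> x = 0)"

definition skew_adjoint :: "('a::euclidean_space \<Rightarrow> 'a \<Rightarrow> real) \<Rightarrow> ('a \<Rightarrow> 'a) \<Rightarrow> bool" where
  "skew_adjoint g J \<longleftrightarrow> linear J \<and> (\<forall>x y. g (J x) y = - g x (J y))"

definition orthonormal_basis :: "('a::euclidean_space \<Rightarrow> 'a \<Rightarrow> real) \<Rightarrow> 'a set \<Rightarrow> bool" where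
  "orthonormal_basis g B \<longleftrightarrow> independent B \<and> span B = UNIV
     \<and> (\<forall>e\<in>B. \<forall>f\<in>B. e \<noteq> f \<longrightarrow> g e f = 0)
     \<and> (\<forall>e\<in>B. g e e = 1 \<or> g e e = -1)"

definition R0 :: "('a \<Rightarrow> 'a \<Rightarrow> real) \<Rightarrow> 'a \<Rightarrow> 'a \<Rightarrow> 'a \<Rightarrow> 'a \<Rightarrow> real" where
  "R0 g X Y Z W = g Y Z * g X W - g X Z * g Y W"

definition RJ :: "('a \<Rightarrow> 'a \<Rightarrow> real) \<Rightarrow> ('a \<Rightarrow> 'a) \<Rightarrow> 'a \<Rightarrow> 'a \<Rightarrow> 'a \<Rightarrow> 'a \<Rightarrow> real" where
  "RJ g J X Y Z W = g (J X) Z * g (J Y) W - g (J Y) Z * g (J X) W + 2 * g (J X) Y * g (J Z) W"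

definition jacobi_op :: "('a::euclidean_space \<Rightarrow> 'a \<Rightarrow> real) \<Rightarrow> ('a \<Rightarrow> 'a \<Rightarrow> 'a \<Rightarrow> 'a \<Rightarrow> real)
    \<Rightarrow> 'a \<Rightarrow> 'a \<Rightarrow> 'a" where
  "jacobi_op g R X Y = (let B = (SOME B. orthonormal_basis g B) in
     (\<Sum>E\<in>B. (g E E * R Y X X E) *\<^sub>R E))"

definition jacobi_eigenvector :: "('a::euclidean_space \<Rightarrow> 'a \<Rightarrow> real) \<Rightarrow> ('a \<Rightarrow> 'a \<Rightarrow> 'a \<Rightarrow> 'a \<Rightarrow> real)
    \<Rightarrow> 'a \<Rightarrow> 'a \<Rightarrow> bool" where
  "jacobi_eigenvector g R X Y \<longleftrightarrow> Y \<noteq> 0 \<and> (\<exists>c::real. jacobi_op g R X Y = c *\<^sub>R Y)"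

definition totally_jacobi_dual :: "('a::euclidean_space \<Rightarrow> 'a \<Rightarrow> real) \<Rightarrow> ('a \<Rightarrow> 'a \<Rightarrow> 'a \<Rightarrow> 'a \<Rightarrow> real) \<Rightarrow> bool" where
  "totally_jacobi_dual g R \<longleftrightarrow>
     (\<forall>X Y. X \<noteq> 0 \<longrightarrow> jacobi_eigenvector g R X Y \<longrightarrow> jacobi_eigenvector g R Y X)"

end

theory Submission imports Defs begin

lemma sp_bil: "scalar_product g \<Longrightarrow> bilinear g" by (simp add: scalar_product_def)
lemma sp_sym: "scalar_product g \<Longrightarrow> g x y = g y x" by (simp add: scalar_product_def)

lemma onb_sub:
  fixes g :: "'a::euclidean_space \<Rightarrow> 'a \<Rightarrow> real"
  assumes sp: "scalar_product g"
  shows "subspace U \<Longrightarrow> (\<forall>x\<in>U. (\<forall>y\<in>U. g x y = 0) \<longrightarrow> x = 0) \<Longrightarrow>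
    \<exists>B. B \<subseteq> U \<and> independent B \<and> span B = U \<and> (\<forall>e\<in>B. \<forall>f\<in>B. e \<noteq> f \<longrightarrow> g e f = 0)
     \<and> (\<forall>e\<in>B. g e e = 1 \<or> g e e = -1)"
proof (induction "dim U" arbitrary: U rule: less_induct)
  case less
  have bil: "bilinear g" using sp by (simp add: scalar_product_def)
  show ?case
  proof (cases "U = {0}")
    case True
    then show ?thesis by (intro exI[of _ "{}"]) (auto simp: independent_empty)
  next
    case False
    then obtain u where u: "u \<in> U" "u \<noteq> 0" using less.prems(1) subspace_0 by blast
    have "\<exists>x\<in>U. g x x \<noteq> 0"
    proof (rule ccontr)
      assume "\<not> ?thesis"
      hence z: "\<And>x. x \<in> U \<Longrightarrow> g x x = 0" by blast
      obtain y where y: "y \<in> U" "g u y \<noteq> 0" using less.prems(2) u by blast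
      have "u + y \<in> U" using less.prems(1) u y by (simp add: subspace_add)
      hence "g (u + y) (u + y) = 0" by (rule z)
      hence "g u u + g u y + g y u + g y y = 0"
        by (simp add: bilinear_ladd[OF bil] bilinear_radd[OF bil])
      hence "2 * g u y = 0" using z[OF u(1)] z[OF y(1)] sp_sym[OF sp, of y u] by simp
      thus False using y by simp
    qed
    then obtain x where x: "x \<in> U" "g x x \<noteq> 0" by blast
    define e where "e = (1 / sqrt \<bar>g x x\<bar>) *\<^sub>R x"
    have eU: "e \<in> U" using less.prems(1) x by (simp add: e_def subspace_scale)
    have "g e e = g x x / \<bar>g x x\<bar>"
      by (simp add: e_def bilinear_lmul[OF bil] bilinear_rmul[OF bil] real_sqrt_mult[symmetric])
    hence ee: "g e e = 1 \<or> g e e = -1" using x(2) by (cases "g x x > 0") auto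
    define U' where "U' = {v\<in>U. g e v = 0}"
    have sU': "subspace U'"
      unfolding subspace_def U'_def using less.prems(1)
      by (auto simp: subspace_0 subspace_add subspace_scale bilinear_rzero[OF bil]
          bilinear_radd[OF bil] bilinear_rmul[OF bil])
    have U'U: "U' \<subseteq> U" by (auto simp: U'_def)
    have eU': "e \<notin> U'" using ee by (auto simp: U'_def)
    have decomp: "z - (g e z / g e e) *\<^sub>R e \<in> U'" if "z \<in> U" for z
      using that eU less.prems(1) ee
      by (auto simp: U'_def subspace_diff subspace_scale bilinear_rsub[OF bil] bilinear_rmul[OF bil])
    have nd: "\<forall>v\<in>U'. (\<forall>y\<in>U'. g v y = 0) \<longrightarrow> v = 0"
    proof (intro ballI impI)
      fix v assume v: "v \<in> U'" and h: "\<forall>y\<in>U'. g v y = 0"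
      have "g v z = 0" if z: "z \<in> U" for z
      proof -
        have "g v (z - (g e z / g e e) *\<^sub>R e) = 0" using h decomp[OF z] by blast
        moreover have "g v e = 0" using v sp_sym[OF sp, of v e] by (simp add: U'_def)
        ultimately show ?thesis by (simp add: bilinear_rsub[OF bil] bilinear_rmul[OF bil])
      qed
      thus "v = 0" using less.prems(2) v U'U by blast
    qed
    have "dim U' < dim U"
    proof (rule dim_psubset)
      have "span U' = U'" "span U = U" using sU' less.prems(1) by simp_all
      thus "span U' \<subset> span U" using U'U eU eU' by blast
    qed
    then obtain B' where B': "B' \<subseteq> U'" "independent B'" "span B' = U'"
      "\<forall>e\<in>B'. \<forall>f\<in>B'. e \<noteq> f \<longrightarrow> g e f = 0" "\<forall>e\<in>B'. g e e = 1 \<or> g e e = -1"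
      using less.hyps[OF _ sU' nd] by blast
    show ?thesis
    proof (intro exI[of _ "insert e B'"] conjI)
      show "insert e B' \<subseteq> U" using B'(1) U'U eU by auto
      show "independent (insert e B')" using B' eU' by (simp add: independent_insertI)
      show "span (insert e B') = U"
      proof
        show "span (insert e B') \<subseteq> U"
          using B'(1) U'U eU less.prems(1) by (simp add: span_minimal)
        show "U \<subseteq> span (insert e B')"
        proof
          fix z assume z: "z \<in> U"
          have "z - (g e z / g e e) *\<^sub>R e \<in> span (insert e B')"
            using decomp[OF z] B'(3) span_mono[of B' "insert e B'"] by auto
          moreover have "(g e z / g e e) *\<^sub>R e \<in> span (insert e B')"
            by (simp add: span_base span_scale)
          ultimately have "(z - (g e z / g e e) *\<^sub>R e) + (g e z / g e e) *\<^sub>R e \<in> span (insert e B')"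
            by (rule span_add)
          thus "z \<in> span (insert e B')" by simp
        qed
      qed
      show "\<forall>a\<in>insert e B'. \<forall>f\<in>insert e B'. a \<noteq> f \<longrightarrow> g a f = 0"
        using B'(1,4) sp_sym[OF sp] by (auto simp: U'_def)
      show "\<forall>a\<in>insert e B'. g a a = 1 \<or> g a a = -1" using B'(5) ee by auto
    qed
  qed
qed

lemma onb_ex:
  fixes g :: "'a::euclidean_space \<Rightarrow> 'a \<Rightarrow> real"
  assumes sp: "scalar_product g"
  shows "\<exists>B. orthonormal_basis g B"
  using onb_sub[OF sp, of UNIV] sp unfolding orthonormal_basis_def scalar_product_def
  by auto

lemma onb_expand:
  fixes g :: "'a::euclidean_space \<Rightarrow> 'a \<Rightarrow> real"
  assumes sp: "scalar_product g" and B: "orthonormal_basis g B"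
  shows "(\<Sum>E\<in>B. (g E E * g V E) *\<^sub>R E) = V"
proof -
  have bil: "bilinear g" using sp by (simp add: scalar_product_def)
  have fin: "finite B" using B by (simp add: orthonormal_basis_def independent_imp_finite)
  have "V \<in> span B" using B by (simp add: orthonormal_basis_def)
  then obtain c where c: "V = (\<Sum>F\<in>B. c F *\<^sub>R F)" using span_finite[OF fin] by auto
  have "g V E = c E * g E E" if E: "E \<in> B" for E
  proof -
    have "g V E = (\<Sum>F\<in>B. c F * g F E)"
      unfolding c using bil unfolding bilinear_def
      by (simp add: linear_sum[where f="\<lambda>x. g x E"] linear_scale[where f="\<lambda>x. g x E"])
    also have "\<dots> = (\<Sum>F\<in>{E}. c F * g F E)"
      using B E fin unfolding orthonormal_basis_def by (intro sum.mono_neutral_right) auto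
    finally show ?thesis by simp
  qed
  hence "(\<Sum>E\<in>B. (g E E * g V E) *\<^sub>R E) = (\<Sum>E\<in>B. c E *\<^sub>R E)"
    using B unfolding orthonormal_basis_def
    by (intro sum.cong refl) (metis (no_types, lifting) mult.left_commute mult_cancel_left2 mult_minus_left mult_minus_right
          minus_minus)
  thus ?thesis using c by simp
qed

lemma jac:
  fixes g :: "'a::euclidean_space \<Rightarrow> 'a \<Rightarrow> real"
  assumes sp: "scalar_product g" and h: "\<And>W. R Y X X W = g V W"
  shows "jacobi_op g R X Y = V"
proof -
  have "orthonormal_basis g (SOME B. orthonormal_basis g B)"
    using onb_ex[OF sp] by (rule someI_ex)
  thus ?thesis unfolding jacobi_op_def Let_def h using onb_expand[OF sp] by blast
qed

lemma core:
  fixes S :: "'a::real_vector \<Rightarrow> 'a"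
  assumes lin: "linear S" and SS: "\<And>v. S (S v) = (- s) *\<^sub>R v" and s0: "s \<ge> 0"
    and sz: "s = 0 \<Longrightarrow> (\<forall>v. S v = 0)" and X: "X \<noteq> 0"
    and eig: "c *\<^sub>R Y = \<mu> *\<^sub>R (p *\<^sub>R Y - b *\<^sub>R X) + 3 *\<^sub>R S X"
  shows "\<exists>\<nu>. \<mu> *\<^sub>R (q *\<^sub>R X - b *\<^sub>R Y) - 3 *\<^sub>R S Y = \<nu> *\<^sub>R X"
proof -
  define d where "d = c - \<mu> * p"
  have dY: "d *\<^sub>R Y = (- (\<mu> * b)) *\<^sub>R X + 3 *\<^sub>R S X"
    using eig by (simp add: d_def algebra_simps)
  show ?thesis
  proof (cases "d = 0")
    case False
    have "S (d *\<^sub>R Y) = (- (\<mu> * b)) *\<^sub>R S X + 3 *\<^sub>R S (S X)"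
      using dY by (simp add: linear_add[OF lin] linear_diff[OF lin] linear_scale[OF lin])
    hence SdY: "d *\<^sub>R S Y = (- (\<mu> * b)) *\<^sub>R S X + (- 3 * s) *\<^sub>R X"
      by (simp add: linear_scale[OF lin] SS)
    have "d *\<^sub>R ((- (\<mu> * b)) *\<^sub>R Y - 3 *\<^sub>R S Y) = (- (\<mu> * b)) *\<^sub>R (d *\<^sub>R Y) - 3 *\<^sub>R (d *\<^sub>R S Y)"
      by (simp add: algebra_simps)
    also have "\<dots> = ((\<mu> * b)^2 + 9 * s) *\<^sub>R X"
      unfolding dY SdY by (simp add: algebra_simps power2_eq_square)
    finally have "(- (\<mu> * b)) *\<^sub>R Y - 3 *\<^sub>R S Y = (((\<mu> * b)^2 + 9 * s) / d) *\<^sub>R X"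
      using False by (metis (no_types, lifting) divide_inverse_commute inverse_eq_divide real_vector.scale_left_imp_eq
          scaleR_scaleR right_inverse vector_space_over_itself.scale_one)
    moreover have "\<mu> *\<^sub>R (q *\<^sub>R X - b *\<^sub>R Y) - 3 *\<^sub>R S Y = (\<mu> * q) *\<^sub>R X + ((- (\<mu> * b)) *\<^sub>R Y - 3 *\<^sub>R S Y)"
      by (simp add: algebra_simps)
    ultimately have "\<mu> *\<^sub>R (q *\<^sub>R X - b *\<^sub>R Y) - 3 *\<^sub>R S Y = (\<mu> * q + ((\<mu> * b)^2 + 9 * s) / d) *\<^sub>R X"
      by (simp add: scaleR_add_left)
    thus ?thesis by blast
  next
    case True
    hence h: "3 *\<^sub>R S X = (\<mu> * b) *\<^sub>R X" using dY by (simp add: algebra_simps)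
    hence h': "S X = (\<mu> * b / 3) *\<^sub>R X"
      by (metis (no_types, lifting) divide_inverse_commute inverse_eq_divide real_vector.scale_left_imp_eq
          scaleR_scaleR right_inverse vector_space_over_itself.scale_one zero_neq_numeral)
    have "9 *\<^sub>R S (S X) = ((\<mu> * b)^2) *\<^sub>R X"
      by (simp add: h' linear_scale[OF lin] power2_eq_square)
    hence "((\<mu> * b)^2 + 9 * s) *\<^sub>R X = 9 *\<^sub>R S (S X) + (9 * s) *\<^sub>R X"
      by (simp add: scaleR_add_left)
    also have "\<dots> = 0" by (simp add: SS)
    finally have "((\<mu> * b)^2 + 9 * s) *\<^sub>R X = 0" .
    hence "(\<mu> * b)^2 + 9 * s = 0" using X by simp
    hence e1: "(\<mu> * b)^2 = 0" "s = 0" using s0 zero_le_power2[of "\<mu> * b"] by linarith+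
    hence "\<mu> * b = 0" by simp
    hence "\<mu> *\<^sub>R (q *\<^sub>R X - b *\<^sub>R Y) - 3 *\<^sub>R S Y = (\<mu> * q) *\<^sub>R X"
      using sz e1 by (simp add: algebra_simps)
    thus ?thesis by blast
  qed
qed

theorem mainTheorem5:
  fixes g :: "'a::euclidean_space \<Rightarrow> 'a \<Rightarrow> real"
    and J :: "nat \<Rightarrow> 'a \<Rightarrow> 'a"
    and \<mu> :: "nat \<Rightarrow> real"
    and m :: nat
  assumes "scalar_product g"
    and "\<And>i. i \<in> {1..m} \<Longrightarrow> skew_adjoint g (J i)"
    and "\<And>i j x. i \<in> {1..m} \<Longrightarrow> j \<in> {1..m} \<Longrightarrow>
           J i (J j x) + J j (J i x) = (if i = j then -2 else 0) *\<^sub>R x"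
  shows "totally_jacobi_dual g
           (\<lambda>X Y Z W. \<mu> 0 * R0 g X Y Z W + (\<Sum>i=1..m. \<mu> i * RJ g (J i) X Y Z W))"
proof -
  note sp = assms(1)
  have bil: "bilinear g" using sp by (simp add: scalar_product_def)
  have sym: "\<And>x y. g x y = g y x" using sp by (simp add: scalar_product_def)
  have linl: "linear (\<lambda>x. g x W)" for W using bil by (simp add: bilinear_def)
  have gsum: "g (\<Sum>i\<in>A. f i) W = (\<Sum>i\<in>A. g (f i) W)" for A f W
    by (rule linear_sum[OF linl])
  have lin: "\<And>i. i \<in> {1..m} \<Longrightarrow> linear (J i)" using assms(2) by (simp add: skew_adjoint_def)
  have skew: "\<And>i x y. i \<in> {1..m} \<Longrightarrow> g (J i x) y = - g x (J i y)"
    using assms(2) by (simp add: skew_adjoint_def)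
  have Jxx: "\<And>i x. i \<in> {1..m} \<Longrightarrow> g (J i x) x = 0"
  proof -
    fix i x assume i: "i \<in> {1..m}"
    have "g (J i x) x = - g (J i x) x" using skew[OF i, of x x] sym[of x "J i x"] by simp
    thus "g (J i x) x = 0" by linarith
  qed
  show ?thesis
    unfolding totally_jacobi_dual_def jacobi_eigenvector_def
  proof (intro allI impI, elim conjE exE)
    fix X Y :: 'a and c :: real
    assume X: "X \<noteq> 0" and Y: "Y \<noteq> 0"
    let ?R = "\<lambda>X Y Z W. \<mu> 0 * R0 g X Y Z W + (\<Sum>i=1..m. \<mu> i * RJ g (J i) X Y Z W)"
    assume eig: "jacobi_op g ?R X Y = c *\<^sub>R Y"
    define cc where "cc i = \<mu> i * g (J i Y) X" for i
    define S where "S v = (\<Sum>i=1..m. cc i *\<^sub>R J i v)" for v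
    define s where "s = (\<Sum>i=1..m. (cc i)^2)"
    have linS: "linear S"
    proof (rule linearI)
      fix x y :: 'a and r :: real
      show "S (x + y) = S x + S y" unfolding S_def
        unfolding sum.distrib[symmetric] by (intro sum.cong refl) (simp add: linear_add[OF lin] scaleR_add_right)
      show "S (r *\<^sub>R x) = r *\<^sub>R S x" unfolding S_def
        unfolding scaleR_sum_right by (intro sum.cong refl) (simp add: linear_scale[OF lin])
    qed
    have SS: "S (S v) = (- s) *\<^sub>R v" for v
    proof -
      define T where "T = (\<Sum>i=1..m. \<Sum>j=1..m. (cc i * cc j) *\<^sub>R J i (J j v))"
      have "S (S v) = T" unfolding S_def T_def
        by (auto simp: linear_sum[OF lin] linear_scale[OF lin] scaleR_sum_right intro!: sum.cong)
      have T2: "T = (\<Sum>i=1..m. \<Sum>j=1..m. (cc i * cc j) *\<^sub>R J j (J i v))"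
        unfolding T_def by (subst sum.swap) (simp add: mult.commute)
      have "T + T = (\<Sum>i=1..m. \<Sum>j=1..m. (cc i * cc j) *\<^sub>R J i (J j v))
                  + (\<Sum>i=1..m. \<Sum>j=1..m. (cc i * cc j) *\<^sub>R J j (J i v))"
        by (rule arg_cong2[OF T_def T2])
      also have "\<dots> = (\<Sum>i=1..m. \<Sum>j=1..m. (cc i * cc j) *\<^sub>R (J i (J j v) + J j (J i v)))"
        by (simp add: sum.distrib[symmetric] scaleR_add_right)
      also have "\<dots> = (\<Sum>i=1..m. \<Sum>j=1..m. (cc i * cc j * (if i = j then -2 else 0)) *\<^sub>R v)"
        using assms(3) by (intro sum.cong refl) simp
      also have "\<dots> = (\<Sum>i=1..m. (-2 * (cc i)^2) *\<^sub>R v)"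
      proof (intro sum.cong refl)
        fix i assume i: "i \<in> {1..m}"
        have "(\<Sum>j=1..m. (cc i * cc j * (if i = j then -2 else 0)) *\<^sub>R v)
            = (\<Sum>j=1..m. if i = j then (-2 * (cc i)^2) *\<^sub>R v else 0)"
          by (intro sum.cong refl) (auto simp: power2_eq_square)
        also have "\<dots> = (-2 * (cc i)^2) *\<^sub>R v" using i by (simp add: sum.delta)
        finally show "(\<Sum>j=1..m. (cc i * cc j * (if i = j then -2 else 0)) *\<^sub>R v) = (-2 * (cc i)^2) *\<^sub>R v" .
      qed
      also have "\<dots> = (- 2 * s) *\<^sub>R v"
        by (simp only: s_def sum_distrib_left scaleR_sum_left)
      finally have "(2::real) *\<^sub>R T = (- 2 * s) *\<^sub>R v" by (simp add: scaleR_2)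
      hence "(1/2::real) *\<^sub>R ((2::real) *\<^sub>R T) = (1/2::real) *\<^sub>R ((- 2 * s) *\<^sub>R v)" by simp
      hence "T = (- s) *\<^sub>R v" by simp
      thus ?thesis using \<open>S (S v) = T\<close> by simp
    qed
    have s0: "s \<ge> 0" unfolding s_def by (simp add: sum_nonneg)
    have sz: "\<forall>v. S v = 0" if "s = 0"
    proof -
      have "\<forall>i\<in>{1..m}. (cc i)^2 = 0"
        using that unfolding s_def by (subst sum_nonneg_eq_0_iff[symmetric]) auto
      thus ?thesis unfolding S_def by simp
    qed
    have RY: "?R Y X X W = g (\<mu> 0 *\<^sub>R (g X X *\<^sub>R Y - g X Y *\<^sub>R X) + 3 *\<^sub>R S X) W" for W
    proof -
      have "(\<Sum>i=1..m. \<mu> i * RJ g (J i) Y X X W) = (\<Sum>i=1..m. 3 * (cc i * g (J i X) W))"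
        by (intro sum.cong refl) (simp add: RJ_def Jxx cc_def algebra_simps)
      moreover have "g (S X) W = (\<Sum>i=1..m. cc i * g (J i X) W)"
        unfolding S_def gsum by (simp add: bilinear_lmul[OF bil])
      ultimately show ?thesis
        by (simp add: R0_def bilinear_ladd[OF bil] bilinear_lsub[OF bil] bilinear_lmul[OF bil]
            sum_distrib_left algebra_simps sym[of Y X])
    qed
    have RX: "?R X Y Y W = g (\<mu> 0 *\<^sub>R (g Y Y *\<^sub>R X - g X Y *\<^sub>R Y) - 3 *\<^sub>R S Y) W" for W
    proof -
      have "(\<Sum>i=1..m. \<mu> i * RJ g (J i) X Y Y W) = (\<Sum>i=1..m. - 3 * (cc i * g (J i Y) W))"
      proof (intro sum.cong refl)
        fix i assume i: "i \<in> {1..m}"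
        have "g (J i X) Y = - g (J i Y) X" using skew[OF i, of X Y] sym by simp
        thus "\<mu> i * RJ g (J i) X Y Y W = - 3 * (cc i * g (J i Y) W)"
          by (simp add: RJ_def Jxx[OF i] cc_def algebra_simps)
      qed
      moreover have "g (S Y) W = (\<Sum>i=1..m. cc i * g (J i Y) W)"
        unfolding S_def gsum by (simp add: bilinear_lmul[OF bil])
      ultimately show ?thesis
        by (simp add: R0_def bilinear_ladd[OF bil] bilinear_lsub[OF bil] bilinear_lmul[OF bil]
            sum_distrib_left algebra_simps sum_negf)
    qed
    have V1: "jacobi_op g ?R X Y = \<mu> 0 *\<^sub>R (g X X *\<^sub>R Y - g X Y *\<^sub>R X) + 3 *\<^sub>R S X"
      by (rule jac[OF sp]) (rule RY)
    have V2: "jacobi_op g ?R Y X = \<mu> 0 *\<^sub>R (g Y Y *\<^sub>R X - g X Y *\<^sub>R Y) - 3 *\<^sub>R S Y"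
      by (rule jac[OF sp]) (rule RX)
    have "c *\<^sub>R Y = \<mu> 0 *\<^sub>R (g X X *\<^sub>R Y - g X Y *\<^sub>R X) + 3 *\<^sub>R S X" using eig V1 by simp
    from core[OF linS SS s0 sz X this, of "g Y Y"]
    show "X \<noteq> 0 \<and> (\<exists>c. jacobi_op g ?R Y X = c *\<^sub>R X)" using X V2 by simp
  qed
qed

end
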